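(* Pairwise statistical parity $PSP$ satisfies monotonicity but does not satisfy deepness. Here (for rankings $r$ of the full population $\mathcal D$, $n=|\mathcal D|$): monotonicity means that for every population $\mathcal D$, every ranking $r$ of $\mathcal D$ and positions $i<j$ with $r(i)\in G_0$, $r(j)\in G_1$ and $y(r(i))\le y(r(j))$, one has $PSP(r_{i\leftrightarrow j})>PSP(r)$; deepness means that for every population $\mathcal D$, every ranking $r$ of $\mathcal D$ and positions $i<j$ (with $j+1\le n$) such that $y(r(i))=y(r(j))$, $y(r(i+1))=y(r(j+1))$, and either ($r(i),r(j)\in G_0$ and $r(i+1),r(j+1)\in G_1$) or ($r(i),r(j)\in G_1$ and $r(i+1),r(j+1)\in G_0$), one has $|PSP(r)-PSP(r_{i\leftrightarrow i+1})|>|PSP(r)-PSP(r_{j\leftrightarrow j+1})|$.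
   Context: A population is a finite set $\mathcal{D}$ of candidates partitioned into two nonempty groups, a non-protected group $G_0$ and a protected group $G_1$; each candidate $d$ has a relevance score $y(d)\in\mathbb R$. A ranking of $\mathcal D$ is a bijection $r:\{1,\dots,n\}\to\mathcal D$, $n=|\mathcal D|$; $d\succ_r d'$ means $d$ is at a smaller position than $d'$; $r_{i\leftrightarrow j}$ is $r$ with the candidates at positions $i,j$ swapped. Pairwise statistical parity (defined only for rankings of the full population): $PSP(r)=\frac{|\{(d,d')\in G_0\times G_1: d'\succ_r d\}|-|\{(d,d')\in G_0\times G_1: d\succ_r d'\}|}{|G_0\times G_1|}$. *)

theory Defs
  imports Main "HOL.Real"
begin

text \<open>Candidates are natural numbers (any finite population is isomorphic to one).
  A population: finite set D partitioned into nonempty G0 (non-protected), G1 (protected).\<close>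

definition population :: "nat set \<Rightarrow> nat set \<Rightarrow> nat set \<Rightarrow> bool" where
  "population D G0 G1 \<longleftrightarrow> finite D \<and> G0 \<noteq> {} \<and> G1 \<noteq> {} \<and> G0 \<inter> G1 = {} \<and> G0 \<union> G1 = D"

definition is_ranking :: "nat set \<Rightarrow> (nat \<Rightarrow> nat) \<Rightarrow> bool" where
  "is_ranking D r \<longleftrightarrow> bij_betw r {1..card D} D"

definition ranked_before :: "nat \<Rightarrow> (nat \<Rightarrow> nat) \<Rightarrow> nat \<Rightarrow> nat \<Rightarrow> bool" where
  "ranked_before n r d d' \<longleftrightarrow> (\<exists>i j. 1 \<le> i \<and> i < j \<and> j \<le> n \<and> r i = d \<and> r j = d')"

definition swap_pos :: "(nat \<Rightarrow> nat) \<Rightarrow> nat \<Rightarrow> nat \<Rightarrow> (nat \<Rightarrow> nat)" where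
  "swap_pos r i j = r(i := r j, j := r i)"

definition PSP :: "nat set \<Rightarrow> nat set \<Rightarrow> nat \<Rightarrow> (nat \<Rightarrow> nat) \<Rightarrow> real" where
  "PSP G0 G1 n r =
     (real (card {(d, d'). d \<in> G0 \<and> d' \<in> G1 \<and> ranked_before n r d' d})
      - real (card {(d, d'). d \<in> G0 \<and> d' \<in> G1 \<and> ranked_before n r d d'}))
     / real (card (G0 \<times> G1))"

definition PSP_monotone :: bool where
  "PSP_monotone \<longleftrightarrow>
    (\<forall>D G0 G1 (y :: nat \<Rightarrow> real) r i j.
       population D G0 G1 \<and> is_ranking D r \<and> 1 \<le> i \<and> i < j \<and> j \<le> card D \<and>
       r i \<in> G0 \<and> r j \<in> G1 \<and> y (r i) \<le> y (r j)
       \<longrightarrow> PSP G0 G1 (card D) (swap_pos r i j) > PSP G0 G1 (card D) r)"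

definition PSP_deep :: bool where
  "PSP_deep \<longleftrightarrow>
    (\<forall>D G0 G1 (y :: nat \<Rightarrow> real) r i j.
       population D G0 G1 \<and> is_ranking D r \<and> 1 \<le> i \<and> i < j \<and> j + 1 \<le> card D \<and>
       y (r i) = y (r j) \<and> y (r (i+1)) = y (r (j+1)) \<and>
       ((r i \<in> G0 \<and> r j \<in> G0 \<and> r (i+1) \<in> G1 \<and> r (j+1) \<in> G1) \<or>
        (r i \<in> G1 \<and> r j \<in> G1 \<and> r (i+1) \<in> G0 \<and> r (j+1) \<in> G0))
       \<longrightarrow> \<bar>PSP G0 G1 (card D) r - PSP G0 G1 (card D) (swap_pos r i (i+1))\<bar>
           > \<bar>PSP G0 G1 (card D) r - PSP G0 G1 (card D) (swap_pos r j (j+1))\<bar>)"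

end

theory Submission
  imports Defs
begin

lemma rb_keep1:
  assumes "r i \<in> G0" "r j \<in> G1" "i < j" "G0 \<inter> G1 = {}"
    "ranked_before n r d' d" "d \<in> G0" "d' \<in> G1" "1 \<le> i" "j \<le> n"
  shows "ranked_before n (swap_pos r i j) d' d"
proof -
  obtain i0 j0 where h: "1 \<le> i0" "i0 < j0" "j0 \<le> n" "r i0 = d'" "r j0 = d"
    using assms(5) unfolding ranked_before_def by blast
  define s where "s k = (if k = i then j else if k = j then i else k)" for k
  have sw: "swap_pos r i j (s k) = r k" for k
    using assms(3) by (auto simp: swap_pos_def s_def)
  have "s i0 < s j0" "1 \<le> s i0" "s j0 \<le> n"
    using h assms by (auto simp: s_def)
  then show ?thesis unfolding ranked_before_def using sw h by metis
qed

lemma rb_keep2: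
  assumes "r i \<in> G0" "r j \<in> G1" "i < j" "G0 \<inter> G1 = {}"
    "ranked_before n (swap_pos r i j) d d'" "d \<in> G0" "d' \<in> G1" "1 \<le> i" "j \<le> n"
  shows "ranked_before n r d d'"
proof -
  obtain i0 j0 where h: "1 \<le> i0" "i0 < j0" "j0 \<le> n" "swap_pos r i j i0 = d" "swap_pos r i j j0 = d'"
    using assms(5) unfolding ranked_before_def by blast
  define s where "s k = (if k = i then j else if k = j then i else k)" for k
  have sw: "r (s k) = swap_pos r i j k" for k
    using assms(3) by (auto simp: swap_pos_def s_def)
  have "s i0 < s j0" "1 \<le> s i0" "s j0 \<le> n"
    using h assms by (auto simp: s_def swap_pos_def split: if_splits)
  then show ?thesis unfolding ranked_before_def using sw h by metis
qed

lemma mono_part: "PSP_monotone"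
  unfolding PSP_monotone_def
proof (intro allI impI, elim conjE)
  fix D G0 G1 and y :: "nat \<Rightarrow> real" and r i j
  assume pop: "population D G0 G1" and rk: "is_ranking D r" and i1: "1 \<le> i" and ij: "i < j"
    and jn: "j \<le> card D" and a: "r i \<in> G0" and b: "r j \<in> G1" and "y (r i) \<le> y (r j)"
  let ?n = "card D"
  let ?r = "swap_pos r i j"
  have fin: "finite (G0 \<times> G1)" and dis: "G0 \<inter> G1 = {}" and ne: "G0 \<noteq> {}" "G1 \<noteq> {}"
    using pop unfolding population_def by auto
  have inj: "inj_on r {1..?n}" using rk unfolding is_ranking_def bij_betw_def by auto
  define B where "B q = {(d, d'). d \<in> G0 \<and> d' \<in> G1 \<and> ranked_before ?n q d' d}" for q
  define A where "A q = {(d, d'). d \<in> G0 \<and> d' \<in> G1 \<and> ranked_before ?n q d d'}" for q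
  have finB: "finite (B q)" for q by (rule finite_subset[OF _ fin]) (auto simp: B_def)
  have finA: "finite (A q)" for q by (rule finite_subset[OF _ fin]) (auto simp: A_def)
  have sub1: "B r \<subseteq> B ?r" using rb_keep1[OF a b ij dis _ _ _ i1 jn] by (auto simp: B_def)
  have inB: "(r i, r j) \<in> B ?r"
  proof -
    have "ranked_before ?n ?r (r j) (r i)" unfolding ranked_before_def
      using i1 ij jn by (intro exI[of _ i] exI[of _ j]) (auto simp: swap_pos_def)
    then show ?thesis using a b by (auto simp: B_def)
  qed
  have notB: "(r i, r j) \<notin> B r"
  proof
    assume "(r i, r j) \<in> B r"
    then obtain i0 j0 where h: "1 \<le> i0" "i0 < j0" "j0 \<le> ?n" "r i0 = r j" "r j0 = r i"
      unfolding B_def ranked_before_def by auto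
    have "i0 = j" using inj h i1 ij jn by (auto dest: inj_onD)
    moreover have "j0 = i" using inj h i1 ij jn by (auto dest: inj_onD)
    ultimately show False using h ij by simp
  qed
  have sub2: "A ?r \<subseteq> A r" using rb_keep2[OF a b ij dis _ _ _ i1 jn] by (auto simp: A_def)
  have inA: "(r i, r j) \<in> A r"
  proof -
    have "ranked_before ?n r (r i) (r j)" unfolding ranked_before_def
      using i1 ij jn by blast
    then show ?thesis using a b by (auto simp: A_def)
  qed
  have notA: "(r i, r j) \<notin> A ?r"
  proof
    assume "(r i, r j) \<in> A ?r"
    then obtain i0 j0 where h: "1 \<le> i0" "i0 < j0" "j0 \<le> ?n" "?r i0 = r i" "?r j0 = r j"
      unfolding A_def ranked_before_def by auto
    have "i0 = j"
      using inj h i1 ij jn by (auto simp: swap_pos_def split: if_splits dest: inj_onD)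
    moreover have "j0 = i"
      using inj h i1 ij jn by (auto simp: swap_pos_def split: if_splits dest: inj_onD)
    ultimately show False using h ij by simp
  qed
  have c1: "card (B r) < card (B ?r)"
    using sub1 inB notB finB by (intro psubset_card_mono) auto
  have c2: "card (A ?r) < card (A r)"
    using sub2 inA notA finA by (intro psubset_card_mono) auto
  have cpos: "card (G0 \<times> G1) > 0" using fin ne by (auto simp: card_gt_0_iff)
  have "(real (card (B r)) - real (card (A r))) < (real (card (B ?r)) - real (card (A ?r)))"
    using c1 c2 by linarith
  then show "PSP G0 G1 ?n ?r > PSP G0 G1 ?n r"
    unfolding PSP_def B_def[symmetric] A_def[symmetric]
    using cpos by (simp add: divide_strict_right_mono)
qed

lemma rb_alt: "ranked_before n r d d' \<longleftrightarrow> (\<exists>i\<in>{1..n}. \<exists>j\<in>{1..n}. i < j \<and> r i = d \<and> r j = d')"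
proof
  assume "ranked_before n r d d'"
  then obtain i j where "1 \<le> i" "i < j" "j \<le> n" "r i = d" "r j = d'" unfolding ranked_before_def by blast
  then show "\<exists>i\<in>{1..n}. \<exists>j\<in>{1..n}. i < j \<and> r i = d \<and> r j = d'"
    by (intro bexI[of _ i] bexI[of _ j]) auto
next
  assume "\<exists>i\<in>{1..n}. \<exists>j\<in>{1..n}. i < j \<and> r i = d \<and> r j = d'"
  then obtain i j where "1 \<le> i" "i < j" "j \<le> n" "r i = d" "r j = d'" by auto
  then show "ranked_before n r d d'" unfolding ranked_before_def by blast
qed
lemma four: "{1..4::nat} = {1,2,3,4}" by auto
lemma s12: "ranked_before 4 (swap_pos id 1 2) d' d \<longleftrightarrow> (d',d) \<in> {(2,1),(2,3),(2,4),(1,3),(1,4),(3,4)}"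
  unfolding rb_alt four by (simp add: swap_pos_def; auto)
lemma s34: "ranked_before 4 (swap_pos id 3 4) d' d \<longleftrightarrow> (d',d) \<in> {(1,2),(1,4),(1,3),(2,4),(2,3),(4,3)}"
  unfolding rb_alt four by (simp add: swap_pos_def; auto)
lemma eqPSP: "PSP {1,3} {2,4} 4 (swap_pos id 1 2) = PSP {1,3} {2,4} 4 (swap_pos id 3 4)"
proof -
  have e1: "{(d, d'). d \<in> {1,3::nat} \<and> d' \<in> {2,4} \<and> ranked_before 4 (swap_pos id 1 2) d' d} = {(1,2),(3,2)}"
    unfolding s12 by (rule set_eqI) (simp split: prod.splits; safe; simp_all)
  have e2: "{(d, d'). d \<in> {1,3::nat} \<and> d' \<in> {2,4} \<and> ranked_before 4 (swap_pos id 1 2) d d'} = {(1,4),(3,4)}"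
    unfolding s12 by (rule set_eqI) (simp split: prod.splits; safe; simp_all)
  have e3: "{(d, d'). d \<in> {1,3::nat} \<and> d' \<in> {2,4} \<and> ranked_before 4 (swap_pos id 3 4) d' d} = {(3,2),(3,4)}"
    unfolding s34 by (rule set_eqI) (simp split: prod.splits; safe; simp_all)
  have e4: "{(d, d'). d \<in> {1,3::nat} \<and> d' \<in> {2,4} \<and> ranked_before 4 (swap_pos id 3 4) d d'} = {(1,2),(1,4)}"
    unfolding s34 by (rule set_eqI) (simp split: prod.splits; safe; simp_all)
  show ?thesis unfolding PSP_def e1 e2 e3 e4 by simp
qed

lemma deep_part: "\<not> PSP_deep"
proof
  assume H: PSP_deep
  have cD: "card {1,2,3,4::nat} = 4" by simp
  have pop: "population {1,2,3,4} {1,3} {2,4}" by (auto simp: population_def)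
  have rk: "is_ranking {1,2,3,4} id" unfolding is_ranking_def cD four by simp
  note I = H[unfolded PSP_deep_def, THEN spec[of _ "{1,2,3,4::nat}"], THEN spec[of _ "{1,3::nat}"], THEN spec[of _ "{2,4::nat}"], THEN spec[of _ "\<lambda>_. 0::real"], THEN spec[of _ id], THEN spec[of _ "1::nat"], THEN spec[of _ "3::nat"], THEN mp]
  have P: "population {1,2,3,4} {1,3} {2,4} \<and> is_ranking {1,2,3,4} id \<and> 1 \<le> (1::nat) \<and> (1::nat) < 3 \<and> 3 + 1 \<le> card {1,2,3,4::nat} \<and>
       (\<lambda>_. 0::real) (id 1) = (\<lambda>_. 0::real) (id 3) \<and> (\<lambda>_. 0::real) (id (1+1)) = (\<lambda>_. 0::real) (id (3+1)) \<and>
       ((id 1 \<in> {1,3::nat} \<and> id 3 \<in> {1,3::nat} \<and> id (1+1) \<in> {2,4::nat} \<and> id (3+1) \<in> {2,4::nat}) \<or>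
        (id 1 \<in> {2,4::nat} \<and> id 3 \<in> {2,4::nat} \<and> id (1+1) \<in> {1,3::nat} \<and> id (3+1) \<in> {1,3::nat}))"
    by (intro conjI pop rk disjI1; simp)
  have n: "(1::nat)+1 = 2" "(3::nat)+1 = 4" by simp_all
  show False using I[OF P] unfolding cD n eqPSP by (simp only: less_irrefl)
qed

theorem theorem11:
  shows "PSP_monotone \<and> \<not> PSP_deep"
  using mono_part deep_part by blast

end
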